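(* Let $n\ge1$, $s\in(0,1)$, $p\in[1,\infty)$, $R>0$. Let $F:\mathbb{R}\times(\mathbb{R}^n\setminus\{0\})\to[0,\infty)$ satisfy $F(t,x)=F(-t,x)=F(-t,-x)$ and, for some $c_*,c^*>0$, $c_*\big(\frac{|t|^p}{|x|^{n+sp}}-\frac{1}{|x|^{n+sp-p}}\big)\le F(t,x)\le c^*\frac{|t|^p}{|x|^{n+sp}}$; let $W:\mathbb{R}\to[0,\infty)$ with $W\in L^\infty(\mathbb{R})\cap C^1(\mathbb{R})$. Let $\varphi\in\mathcal{X}_R$ and $u\in\mathcal{W}^{s,p}_{R,\varphi}$. Then there exists $C>0$ depending on $n,s,p,R,\|W\|_{L^\infty(\mathbb{R})},\|\varphi\|_{L^\infty(\mathbb{R}^n)}$ such that $$\mathcal{E}(u,B_R)\le C\big(\|u\|^p_{W^{s,p}(B_R)}+[u]^p_{R,\varphi}+1\big),$$ and moreover $\mathcal{K}_R(u)=u(B_R,B_R)+2\,u(B_R,\mathcal{C}B_R)$.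
   Context: $B_R$ is the open ball of radius $R$ centered at $0$ and $\mathcal{C}B_R=\mathbb{R}^n\setminus B_R$. $\mathcal{K}_R(u)=\iint_{\mathbb{R}^{2n}\setminus(\mathcal{C}B_R)^2}F(u(x)-u(y),x-y)\,dx\,dy$ and $\mathcal{E}(u,B_R)=\mathcal{K}_R(u)+\int_{B_R}W(u)\,dx$. For sets $A,B\subset\mathbb{R}^n$, $u(A,B)=\int_A\int_BF(u(x)-u(y),x-y)\,dx\,dy$. The Gagliardo seminorm is $[u]_{W^{s,p}(\Omega)}=\big(\int_\Omega\int_\Omega\frac{|u(x)-u(y)|^p}{|x-y|^{n+sp}}dx\,dy\big)^{1/p}$ and $\|u\|_{W^{s,p}(\Omega)}=(\|u\|^p_{L^p(\Omega)}+[u]^p_{W^{s,p}(\Omega)})^{1/p}$. $\mathcal{X}_R=\{\varphi:\mathbb{R}^n\to\mathbb{R}:\varphi\in L^\infty(\mathbb{R}^n)\cap W^{s,p}(B_{2R})\}$. $[u]_{R,\varphi}=\big(\int_{B_R}\int_{B_{2R}\setminus B_R}\frac{|u(x)-\varphi(y)|^p}{|x-y|^{n+sp}}dy\,dx\big)^{1/p}$. $\mathcal{W}^{s,p}_{R,\varphi}=\{u:\mathbb{R}^n\to\mathbb{R}: u|_{B_R}\in W^{s,p}(B_R),\ [u]_{R,\varphi}<\infty,\ u=\varphi \text{ on }\mathcal{C}B_R\}$. *)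

theory Defs
  imports "HOL-Analysis.Analysis" "HOL-Probability.Essential_Supremum"
begin

(* Ambient space R^n is an arbitrary euclidean_space 'a, n = DIM('a); measure = Lebesgue. *)

definition Linfty_norm :: "('b::euclidean_space \<Rightarrow> real) \<Rightarrow> ereal" where
  "Linfty_norm f = esssup lebesgue (\<lambda>x. ereal \<bar>f x\<bar>)"

definition in_Linfty :: "('b::euclidean_space \<Rightarrow> real) \<Rightarrow> bool" where
  "in_Linfty f \<longleftrightarrow> f \<in> borel_measurable lebesgue \<and> Linfty_norm f < \<infinity>"

definition Lp_pow :: "real \<Rightarrow> ('a::euclidean_space \<Rightarrow> real) \<Rightarrow> 'a set \<Rightarrow> ennreal" where
  "Lp_pow p u \<Omega> = (\<integral>\<^sup>+ x \<in> \<Omega>. ennreal (\<bar>u x\<bar> powr p) \<partial>lebesgue)"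

definition gagliardo_pow :: "real \<Rightarrow> real \<Rightarrow> ('a::euclidean_space \<Rightarrow> real) \<Rightarrow> 'a set \<Rightarrow> ennreal" where
  "gagliardo_pow s p u \<Omega> = (\<integral>\<^sup>+ x \<in> \<Omega>. (\<integral>\<^sup>+ y \<in> \<Omega>.
      ennreal (\<bar>u x - u y\<bar> powr p / norm (x - y) powr (real DIM('a) + s * p)) \<partial>lebesgue) \<partial>lebesgue)"

definition Wsp_norm_pow :: "real \<Rightarrow> real \<Rightarrow> ('a::euclidean_space \<Rightarrow> real) \<Rightarrow> 'a set \<Rightarrow> ennreal" where
  "Wsp_norm_pow s p u \<Omega> = Lp_pow p u \<Omega> + gagliardo_pow s p u \<Omega>"

definition in_Wsp :: "real \<Rightarrow> real \<Rightarrow> ('a::euclidean_space \<Rightarrow> real) \<Rightarrow> 'a set \<Rightarrow> bool" where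
  "in_Wsp s p u \<Omega> \<longleftrightarrow> set_borel_measurable lebesgue \<Omega> u \<and> Wsp_norm_pow s p u \<Omega> < \<infinity>"

definition bdry_pow :: "real \<Rightarrow> real \<Rightarrow> real \<Rightarrow> ('a::euclidean_space \<Rightarrow> real) \<Rightarrow> ('a \<Rightarrow> real) \<Rightarrow> ennreal" where
  "bdry_pow s p R u \<phi> = (\<integral>\<^sup>+ x \<in> ball 0 R. (\<integral>\<^sup>+ y \<in> ball 0 (2*R) - ball 0 R.
      ennreal (\<bar>u x - \<phi> y\<bar> powr p / norm (x - y) powr (real DIM('a) + s * p)) \<partial>lebesgue) \<partial>lebesgue)"

definition X_R :: "real \<Rightarrow> real \<Rightarrow> real \<Rightarrow> ('a::euclidean_space \<Rightarrow> real) set" where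
  "X_R s p R = {\<phi>. in_Linfty \<phi> \<and> in_Wsp s p \<phi> (ball 0 (2*R))}"

definition W_R_phi :: "real \<Rightarrow> real \<Rightarrow> real \<Rightarrow> ('a::euclidean_space \<Rightarrow> real) \<Rightarrow> ('a \<Rightarrow> real) set" where
  "W_R_phi s p R \<phi> = {u. in_Wsp s p u (ball 0 R) \<and> bdry_pow s p R u \<phi> < \<infinity>
       \<and> (\<forall>x. x \<notin> ball 0 R \<longrightarrow> u x = \<phi> x)}"

definition uAB :: "(real \<Rightarrow> 'a::euclidean_space \<Rightarrow> real) \<Rightarrow> ('a \<Rightarrow> real) \<Rightarrow> 'a set \<Rightarrow> 'a set \<Rightarrow> ennreal" where
  "uAB F u A B = (\<integral>\<^sup>+ x \<in> A. (\<integral>\<^sup>+ y \<in> B. ennreal (F (u x - u y) (x - y)) \<partial>lebesgue) \<partial>lebesgue)"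

definition K_R :: "(real \<Rightarrow> 'a::euclidean_space \<Rightarrow> real) \<Rightarrow> real \<Rightarrow> ('a \<Rightarrow> real) \<Rightarrow> ennreal" where
  "K_R F R u = (\<integral>\<^sup>+ x. (\<integral>\<^sup>+ y. indicator (UNIV - (- ball 0 R) \<times> (- ball 0 R)) (x, y)
      * ennreal (F (u x - u y) (x - y)) \<partial>lebesgue) \<partial>lebesgue)"

definition energy :: "(real \<Rightarrow> 'a::euclidean_space \<Rightarrow> real) \<Rightarrow> (real \<Rightarrow> real) \<Rightarrow> real \<Rightarrow> ('a \<Rightarrow> real) \<Rightarrow> ennreal" where
  "energy F W R u = K_R F R u + (\<integral>\<^sup>+ x \<in> ball 0 R. ennreal (W (u x)) \<partial>lebesgue)"

definition admissible_F :: "real \<Rightarrow> real \<Rightarrow> real \<Rightarrow> (real \<Rightarrow> 'a::euclidean_space \<Rightarrow> real) \<Rightarrow> bool" where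
  "admissible_F s p cS F \<longleftrightarrow>
     (\<lambda>(t, x). F t x) \<in> borel_measurable borel \<and>
     (\<exists>cs>0. \<forall>t x. x \<noteq> 0 \<longrightarrow>
        0 \<le> F t x \<and> F t x = F (-t) x \<and> F t x = F (-t) (-x) \<and>
        cs * (\<bar>t\<bar> powr p / norm x powr (real DIM('a) + s * p)
              - 1 / norm x powr (real DIM('a) + s * p - p)) \<le> F t x \<and>
        F t x \<le> cS * \<bar>t\<bar> powr p / norm x powr (real DIM('a) + s * p))"

definition admissible_W :: "(real \<Rightarrow> real) \<Rightarrow> bool" where
  "admissible_W W \<longleftrightarrow> (\<forall>t. 0 \<le> W t) \<and> in_Linfty W \<and> W C1_differentiable_on UNIV"

end

theory Submission imports Defs begin
lemma sigma_finite_lebesgue: "sigma_finite_measure (lebesgue :: 'a::euclidean_space measure)"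
proof
  show "\<exists>A::'a set set. countable A \<and> A \<subseteq> sets lebesgue \<and> \<Union>A = space lebesgue \<and> (\<forall>a\<in>A. emeasure lebesgue a \<noteq> \<infinity>)"
  proof (intro exI[of _ "range (\<lambda>n::nat. ball (0::'a) (real n))"] conjI)
    show "\<Union>(range (\<lambda>n::nat. ball (0::'a) (real n))) = space lebesgue"
      by (auto, meson reals_Archimedean2)
    show "\<forall>a\<in>range (\<lambda>n::nat. ball (0::'a) (real n)). emeasure lebesgue a \<noteq> \<infinity>"
      using emeasure_bounded_finite[OF bounded_ball] by (auto simp: less_top[symmetric])
  qed auto
qed


interpretation leb: sigma_finite_measure "lebesgue :: 'a::euclidean_space measure"
  by (rule sigma_finite_lebesgue)

interpretation leb_pair: pair_sigma_finite "lebesgue :: 'a::euclidean_space measure" "lebesgue :: 'a measure" ..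

lemma id_meas_leb[measurable]: "(\<lambda>x::'a::euclidean_space. x) \<in> borel_measurable lebesgue"
  by (intro measurable_completion) simp

lemma meas_u:
  fixes u \<phi> :: "'a::euclidean_space \<Rightarrow> real"
  assumes "set_borel_measurable lebesgue (ball 0 R) u" "\<phi> \<in> borel_measurable lebesgue"
    "\<forall>x. x \<notin> ball 0 R \<longrightarrow> u x = \<phi> x"
  shows "u \<in> borel_measurable lebesgue"
proof -
  have "u = (\<lambda>x. if x \<in> ball 0 R then indicator (ball 0 R) x *\<^sub>R u x else \<phi> x)"
    using assms(3) by (auto simp: fun_eq_iff)
  also have "\<dots> \<in> borel_measurable lebesgue"
  proof -
    have [measurable]: "ball 0 R \<in> sets (lebesgue :: 'a measure)" by simp
    show ?thesis using assms(1,2) unfolding set_borel_measurable_def by measurable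
  qed
  finally show ?thesis .
qed

lemma meas_H:
  fixes F :: "real \<Rightarrow> 'a::euclidean_space \<Rightarrow> real" and u :: "'a \<Rightarrow> real"
  assumes Fm: "(\<lambda>(t, x). F t x) \<in> borel_measurable borel" and um: "u \<in> borel_measurable lebesgue"
  shows "(\<lambda>z. F (u (fst z) - u (snd z)) (fst z - snd z)) \<in> borel_measurable (lebesgue \<Otimes>\<^sub>M lebesgue)"
proof -
  have g: "(\<lambda>z. (u (fst z) - u (snd z), fst z - snd z)) \<in> borel_measurable (lebesgue \<Otimes>\<^sub>M (lebesgue::'a measure))"
    using um by measurable
  show ?thesis using measurable_compose[OF g Fm] by simp
qed

lemma setint_prod:
  fixes f :: "'a::euclidean_space \<Rightarrow> 'a \<Rightarrow> ennreal"
  assumes f: "(\<lambda>z. f (fst z) (snd z)) \<in> borel_measurable (lebesgue \<Otimes>\<^sub>M lebesgue)"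
    and A: "A \<in> sets lebesgue" and B: "B \<in> sets lebesgue"
  shows "(\<integral>\<^sup>+ x \<in> A. (\<integral>\<^sup>+ y \<in> B. f x y \<partial>lebesgue) \<partial>lebesgue)
       = (\<integral>\<^sup>+ z. indicator A (fst z) * indicator B (snd z) * f (fst z) (snd z) \<partial>(lebesgue \<Otimes>\<^sub>M lebesgue))"
proof -
  have m: "(\<lambda>z. indicator A (fst z) * indicator B (snd z) * f (fst z) (snd z)) \<in> borel_measurable (lebesgue \<Otimes>\<^sub>M lebesgue)"
    using f A B by measurable
  have "(\<integral>\<^sup>+ x \<in> A. (\<integral>\<^sup>+ y \<in> B. f x y \<partial>lebesgue) \<partial>lebesgue)
      = (\<integral>\<^sup>+ x. (\<integral>\<^sup>+ y. indicator A x * indicator B y * f x y \<partial>lebesgue) \<partial>lebesgue)"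
  proof (rule nn_integral_cong)
    fix x :: 'a
    have mx: "(\<lambda>y. f x y * indicator B y) \<in> borel_measurable lebesgue"
      using measurable_Pair2[OF f, of x] B by simp
    show "(\<integral>\<^sup>+ y. f x y * indicator B y \<partial>lebesgue) * indicator A x
        = (\<integral>\<^sup>+ y. indicator A x * indicator B y * f x y \<partial>lebesgue)"
      using nn_integral_cmult[OF mx, of "indicator A x"]
      by (simp add: mult_ac)
  qed
  also have "\<dots> = (\<integral>\<^sup>+ z. indicator A (fst z) * indicator B (snd z) * f (fst z) (snd z) \<partial>(lebesgue \<Otimes>\<^sub>M lebesgue))"
    using leb.nn_integral_fst[OF m] by simp
  finally show ?thesis .
qed

lemma K_R_split:
  fixes F :: "real \<Rightarrow> 'a::euclidean_space \<Rightarrow> real" and u :: "'a \<Rightarrow> real"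
  assumes Fm: "(\<lambda>(t, x). F t x) \<in> borel_measurable borel" and um: "u \<in> borel_measurable lebesgue"
    and sym: "\<forall>t x. x \<noteq> 0 \<longrightarrow> F t x = F (-t) (-x)"
  shows "K_R F R u = uAB F u (ball 0 R) (ball 0 R) + 2 * uAB F u (ball 0 R) (- ball 0 R)"
proof -
  define B where "B = ball (0::'a) R"
  define H where "H z = ennreal (F (u (fst z) - u (snd z)) (fst z - snd z))" for z
  have Hm[measurable]: "H \<in> borel_measurable (lebesgue \<Otimes>\<^sub>M lebesgue)"
    unfolding H_def using meas_H[OF Fm um] by measurable
  have Hm'[measurable]: "(\<lambda>z. ennreal (F (u (fst z) - u (snd z)) (fst z - snd z))) \<in> borel_measurable (lebesgue \<Otimes>\<^sub>M lebesgue)"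
    using meas_H[OF Fm um] by measurable
  have Bm[measurable]: "B \<in> sets lebesgue" "- B \<in> sets lebesgue" unfolding B_def by auto
  define a where "a z = indicator B (fst z) * indicator B (snd z) * H z" for z
  define b where "b z = indicator B (fst z) * indicator (-B) (snd z) * H z" for z
  define c where "c z = indicator (-B) (fst z) * indicator B (snd z) * H z" for z
  have am[measurable]: "a \<in> borel_measurable (lebesgue \<Otimes>\<^sub>M lebesgue)" unfolding a_def by measurable
  have bm[measurable]: "b \<in> borel_measurable (lebesgue \<Otimes>\<^sub>M lebesgue)" unfolding b_def by measurable
  have cm[measurable]: "c \<in> borel_measurable (lebesgue \<Otimes>\<^sub>M lebesgue)" unfolding c_def by measurable
  have ind: "indicator (UNIV - (- B) \<times> (- B)) z * H z = a z + b z + c z" for z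
    unfolding a_def b_def c_def by (cases "fst z \<in> B"; cases "snd z \<in> B"; cases z) (auto simp: indicator_def)
  have m0: "(\<lambda>z. indicator (UNIV - (- B) \<times> (- B)) z * H z) \<in> borel_measurable (lebesgue \<Otimes>\<^sub>M lebesgue)"
    by measurable
  have "K_R F R u = (\<integral>\<^sup>+ z. indicator (UNIV - (- B) \<times> (- B)) z * H z \<partial>(lebesgue \<Otimes>\<^sub>M lebesgue))"
    unfolding K_R_def using leb.nn_integral_fst[OF m0] by (simp add: H_def B_def)
  also have "\<dots> = (\<integral>\<^sup>+ z. a z + b z + c z \<partial>(lebesgue \<Otimes>\<^sub>M lebesgue))"
    by (simp add: ind)
  also have "\<dots> = integral\<^sup>N (lebesgue \<Otimes>\<^sub>M lebesgue) a + integral\<^sup>N (lebesgue \<Otimes>\<^sub>M lebesgue) b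
      + integral\<^sup>N (lebesgue \<Otimes>\<^sub>M lebesgue) c"
    by (simp add: nn_integral_add)
  also have "integral\<^sup>N (lebesgue \<Otimes>\<^sub>M lebesgue) c = integral\<^sup>N (lebesgue \<Otimes>\<^sub>M lebesgue) b"
  proof -
    have "integral\<^sup>N (lebesgue \<Otimes>\<^sub>M lebesgue) c = (\<integral>\<^sup>+ x. (\<integral>\<^sup>+ y. c (x, y) \<partial>lebesgue) \<partial>lebesgue)"
      using leb.nn_integral_fst[OF cm] by simp
    also have "\<dots> = (\<integral>\<^sup>+ y. (\<integral>\<^sup>+ x. c (x, y) \<partial>lebesgue) \<partial>lebesgue)"
      using leb_pair.Fubini'[of "\<lambda>x y. c (x, y)"] cm by simp
    also have "\<dots> = (\<integral>\<^sup>+ y. (\<integral>\<^sup>+ x. b (y, x) \<partial>lebesgue) \<partial>lebesgue)"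
    proof (intro nn_integral_cong)
      fix x y
      show "c (x, y) = b (y, x)"
      proof (cases "x \<notin> B \<and> y \<in> B")
        case True
        then have "y - x \<noteq> 0" by auto
        then have "F (u x - u y) (x - y) = F (u y - u x) (y - x)"
          using sym[rule_format, of "y - x" "u y - u x"] by simp
        then show ?thesis using True by (simp add: c_def b_def H_def)
      next
        case False
        then show ?thesis by (auto simp: c_def b_def)
      qed
    qed
    also have "\<dots> = integral\<^sup>N (lebesgue \<Otimes>\<^sub>M lebesgue) b"
      using leb.nn_integral_fst[OF bm] by simp
    finally show ?thesis .
  qed
  also have "integral\<^sup>N (lebesgue \<Otimes>\<^sub>M lebesgue) a = uAB F u B B"
    unfolding uAB_def a_def H_def
    by (subst setint_prod) (use Hm' in auto)
  also have "integral\<^sup>N (lebesgue \<Otimes>\<^sub>M lebesgue) b = uAB F u B (- B)"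
    unfolding uAB_def b_def H_def
    by (subst setint_prod) (use Hm' in auto)
  finally show ?thesis unfolding B_def by (simp add: mult_2 add.assoc)
qed

lemma powr_sum_le:
  fixes a b p :: real
  assumes "0 \<le> a" "0 \<le> b" "0 < p"
  shows "(a+b) powr p \<le> 2 powr p * (a powr p + b powr p)"
proof -
  have "(a+b) powr p \<le> (2 * max a b) powr p"
    using assms by (intro powr_mono2) auto
  also have "\<dots> = 2 powr p * max a b powr p"
    using assms by (simp add: powr_mult)
  also have "max a b powr p \<le> a powr p + b powr p"
    by (cases "a \<le> b") (auto simp: max_def)
  then have "2 powr p * max a b powr p \<le> 2 powr p * (a powr p + b powr p)"
    by (intro mult_left_mono) auto
  finally show ?thesis .
qed

lemma far_pt:
  fixes x y :: "'a::euclidean_space" and a v M p \<alpha> R :: real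
  assumes "norm x < R" "2*R \<le> norm y" "\<bar>v\<bar> \<le> M" "0 < p" "0 < \<alpha>"
  shows "\<bar>a - v\<bar> powr p / norm (x-y) powr \<alpha>
      \<le> 2 powr p * 2 powr \<alpha> * (\<bar>a\<bar> powr p + M powr p) * norm y powr (-\<alpha>)"
proof -
  have M: "0 \<le> M" using assms(3) by simp
  have R: "0 < R" using assms(1) norm_ge_zero[of x] by linarith
  have ny: "0 < norm y" using assms(2) R by linarith
  have "\<bar>a - v\<bar> powr p \<le> (\<bar>a\<bar> + M) powr p"
    using assms by (intro powr_mono2) auto
  also have "\<dots> \<le> 2 powr p * (\<bar>a\<bar> powr p + M powr p)"
    using M assms by (intro powr_sum_le) auto
  finally have num: "\<bar>a - v\<bar> powr p \<le> 2 powr p * (\<bar>a\<bar> powr p + M powr p)" .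
  have "norm y / 2 \<le> norm (x - y)"
    using norm_triangle_ineq2[of y x] assms(1,2) by (simp add: norm_minus_commute)
  then have "(norm y / 2) powr \<alpha> \<le> norm (x - y) powr \<alpha>"
    using ny assms(5) by (intro powr_mono2) auto
  then have den: "norm y powr \<alpha> / 2 powr \<alpha> \<le> norm (x - y) powr \<alpha>"
    using ny by (simp add: powr_divide)
  have dpos: "0 < norm y powr \<alpha> / 2 powr \<alpha>" using ny by simp
  have "\<bar>a - v\<bar> powr p / norm (x-y) powr \<alpha> \<le> 2 powr p * (\<bar>a\<bar> powr p + M powr p) / (norm y powr \<alpha> / 2 powr \<alpha>)"
    using num den dpos by (intro frac_le) auto
  also have "\<dots> = 2 powr p * 2 powr \<alpha> * (\<bar>a\<bar> powr p + M powr p) * norm y powr (-\<alpha>)"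
    using ny by (simp add: powr_minus_divide field_simps)
  finally show ?thesis .
qed

lemma meas_G:
  fixes a b :: "'a::euclidean_space \<Rightarrow> real"
  assumes [measurable]: "a \<in> borel_measurable lebesgue" "b \<in> borel_measurable lebesgue"
  shows "(\<lambda>z. ennreal (\<bar>a (fst z) - b (snd z)\<bar> powr p / norm (fst z - snd z) powr q))
     \<in> borel_measurable (lebesgue \<Otimes>\<^sub>M lebesgue)"
  by measurable

lemma setint_cmult:
  fixes f :: "'a::euclidean_space \<Rightarrow> 'a \<Rightarrow> ennreal"
  assumes f: "(\<lambda>z. f (fst z) (snd z)) \<in> borel_measurable (lebesgue \<Otimes>\<^sub>M lebesgue)"
    and A: "A \<in> sets lebesgue" and B: "B \<in> sets lebesgue"
  shows "(\<integral>\<^sup>+ x \<in> A. (\<integral>\<^sup>+ y \<in> B. c * f x y \<partial>lebesgue) \<partial>lebesgue)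
       = c * (\<integral>\<^sup>+ x \<in> A. (\<integral>\<^sup>+ y \<in> B. f x y \<partial>lebesgue) \<partial>lebesgue)"
proof -
  have f2: "(\<lambda>z. c * f (fst z) (snd z)) \<in> borel_measurable (lebesgue \<Otimes>\<^sub>M lebesgue)"
    using f by measurable
  have m: "(\<lambda>z. indicator A (fst z) * indicator B (snd z) * f (fst z) (snd z)) \<in> borel_measurable (lebesgue \<Otimes>\<^sub>M lebesgue)"
    using f A B by measurable
  show ?thesis
    using setint_prod[OF f2 A B, of] setint_prod[OF f A B] nn_integral_cmult[OF m, of c]
    by (simp add: mult_ac)
qed

lemma BB_bound:
  fixes F :: "real \<Rightarrow> 'a::euclidean_space \<Rightarrow> real" and u :: "'a \<Rightarrow> real"
  assumes um: "u \<in> borel_measurable lebesgue" and cS: "0 \<le> cS"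
    and up: "\<forall>t x. x \<noteq> 0 \<longrightarrow> F t x \<le> cS * \<bar>t\<bar> powr p / norm x powr (real DIM('a) + s * p)"
  shows "uAB F u (ball 0 R) (ball 0 R) \<le> ennreal cS * gagliardo_pow s p u (ball 0 R)"
proof -
  define B where "B = ball (0::'a) R"
  define G where "G x y = ennreal (\<bar>u x - u y\<bar> powr p / norm (x - y) powr (real DIM('a) + s * p))" for x y
  have Gm: "(\<lambda>z. G (fst z) (snd z)) \<in> borel_measurable (lebesgue \<Otimes>\<^sub>M lebesgue)"
    unfolding G_def by (rule meas_G[OF um um])
  have "uAB F u B B \<le> (\<integral>\<^sup>+ x \<in> B. (\<integral>\<^sup>+ y \<in> B. ennreal cS * G x y \<partial>lebesgue) \<partial>lebesgue)"
    unfolding uAB_def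
  proof (rule nn_integral_mono)
    fix x :: 'a
    have "(\<integral>\<^sup>+ y. ennreal (F (u x - u y) (x - y)) * indicator B y \<partial>lebesgue) \<le> (\<integral>\<^sup>+ y. ennreal cS * G x y * indicator B y \<partial>lebesgue)"
    proof (rule nn_integral_mono_AE)
      show "AE y in lebesgue. ennreal (F (u x - u y) (x - y)) * indicator B y \<le> ennreal cS * G x y * indicator B y"
        using AE_completion[OF AE_lborel_singleton[of x]]
      proof (rule eventually_mono)
        fix y assume "y \<noteq> x"
        then have "F (u x - u y) (x - y) \<le> cS * (\<bar>u x - u y\<bar> powr p / norm (x - y) powr (real DIM('a) + s * p))"
          using up[rule_format, of "x - y" "u x - u y"] by simp
        then have "ennreal (F (u x - u y) (x - y)) \<le> ennreal cS * G x y"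
          unfolding G_def using cS by (simp add: ennreal_mult[symmetric] ennreal_leI)
        then show "ennreal (F (u x - u y) (x - y)) * indicator B y \<le> ennreal cS * G x y * indicator B y"
          by (rule mult_right_mono) simp
      qed
    qed
    then show "(\<integral>\<^sup>+ y \<in> B. ennreal (F (u x - u y) (x - y)) \<partial>lebesgue) * indicator B x
        \<le> (\<integral>\<^sup>+ y \<in> B. ennreal cS * G x y \<partial>lebesgue) * indicator B x"
      by (rule mult_right_mono) simp
  qed
  also have "\<dots> = ennreal cS * gagliardo_pow s p u B"
    unfolding gagliardo_pow_def G_def[symmetric] by (rule setint_cmult[OF Gm]) (auto simp: B_def)
  finally show ?thesis unfolding B_def .
qed

lemma BC_bound:
  fixes F :: "real \<Rightarrow> 'a::euclidean_space \<Rightarrow> real" and u \<phi> :: "'a \<Rightarrow> real"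
  assumes um: "u \<in> borel_measurable lebesgue" and phim: "\<phi> \<in> borel_measurable lebesgue"
    and cS: "0 \<le> cS" and p: "0 < p" and al: "0 < real DIM('a) + s * p"
    and up: "\<forall>t x. x \<noteq> 0 \<longrightarrow> F t x \<le> cS * \<bar>t\<bar> powr p / norm x powr (real DIM('a) + s * p)"
    and uphi: "\<forall>x. x \<notin> ball 0 R \<longrightarrow> u x = \<phi> x"
    and phibd: "AE y in lebesgue. \<bar>\<phi> y\<bar> \<le> M"
  defines "T \<equiv> (\<integral>\<^sup>+ y \<in> - ball (0::'a) (2*R). ennreal (norm y powr (-(real DIM('a) + s * p))) \<partial>lebesgue)"
    and "K0 \<equiv> 2 powr p * 2 powr (real DIM('a) + s * p)"
  shows "uAB F u (ball 0 R) (- ball 0 R) \<le> ennreal cS * bdry_pow s p R u \<phi>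
     + ennreal (cS * K0) * T * Lp_pow p u (ball 0 R)
     + ennreal (cS * K0) * T * ennreal (M powr p) * emeasure lebesgue (ball (0::'a) R)"
proof -
  define \<alpha> where "\<alpha> = real DIM('a) + s * p"
  define B where "B = ball (0::'a) R"
  define A where "A = ball (0::'a) (2*R) - ball 0 R"
  define D where "D = - ball (0::'a) (2*R)"
  have [measurable]: "B \<in> sets lebesgue" "A \<in> sets lebesgue" "D \<in> sets lebesgue"
    unfolding A_def B_def D_def by auto
  define G where "G x y = ennreal (\<bar>u x - \<phi> y\<bar> powr p / norm (x - y) powr \<alpha>)" for x y
  have Gm: "(\<lambda>z. G (fst z) (snd z)) \<in> borel_measurable (lebesgue \<Otimes>\<^sub>M lebesgue)"
    unfolding G_def by (rule meas_G[OF um phim])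
  have Gm2[measurable]: "(\<lambda>(x, y). G x y * indicator A y) \<in> borel_measurable (lebesgue \<Otimes>\<^sub>M lebesgue)"
    using Gm by (simp add: case_prod_beta') measurable
  define I where "I x = (\<integral>\<^sup>+ y \<in> A. G x y \<partial>lebesgue)" for x
  have Im[measurable]: "I \<in> borel_measurable lebesgue"
    unfolding I_def using leb.borel_measurable_nn_integral[OF Gm2] by simp
  define f where "f x = ennreal cS * I x + (ennreal (cS * K0) * T) * ennreal (\<bar>u x\<bar> powr p)
      + ennreal (cS * K0) * T * ennreal (M powr p)" for x
  have pt: "(\<integral>\<^sup>+ y \<in> - B. ennreal (F (u x - u y) (x - y)) \<partial>lebesgue) \<le> f x" if x: "x \<in> B" for x
  proof -
    define g1 where "g1 y = ennreal cS * (G x y * indicator A y)" for y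
    define g2 where "g2 y = ennreal (cS * K0 * (\<bar>u x\<bar> powr p + M powr p)) * (ennreal (norm y powr (-\<alpha>)) * indicator D y)" for y
    have [measurable]: "g1 \<in> borel_measurable lebesgue" "g2 \<in> borel_measurable lebesgue"
      unfolding g1_def g2_def using measurable_Pair2[OF Gm, of x] by (simp_all, measurable)
    have "(\<integral>\<^sup>+ y \<in> - B. ennreal (F (u x - u y) (x - y)) \<partial>lebesgue) \<le> (\<integral>\<^sup>+ y. g1 y + g2 y \<partial>lebesgue)"
    proof (rule nn_integral_mono_AE)
      show "AE y in lebesgue. ennreal (F (u x - u y) (x - y)) * indicator (- B) y \<le> g1 y + g2 y"
        using phibd
      proof (rule eventually_mono)
        fix y assume py: "\<bar>\<phi> y\<bar> \<le> M"
        show "ennreal (F (u x - u y) (x - y)) * indicator (- B) y \<le> g1 y + g2 y"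
        proof (cases "y \<in> B")
          case True then show ?thesis by simp
        next
          case False
          then have uy: "u y = \<phi> y" using uphi B_def by auto
          have "x \<noteq> y" using x False by auto
          then have F1: "F (u x - u y) (x - y) \<le> cS * (\<bar>u x - \<phi> y\<bar> powr p / norm (x - y) powr \<alpha>)"
            using up[rule_format, of "x - y" "u x - u y"] uy by (simp add: \<alpha>_def)
          show ?thesis
          proof (cases "y \<in> A")
            case True
            then have "ennreal (F (u x - u y) (x - y)) \<le> g1 y"
              unfolding g1_def G_def using F1 cS by (simp add: ennreal_mult[symmetric] ennreal_leI)
            then show ?thesis using False by (simp add: add_increasing2)
          next
            case nA: False
            then have yD: "y \<in> D" using False unfolding A_def B_def D_def by auto
            have xn: "norm x < R" using x B_def by simp
            have yn: "2 * R \<le> norm y" using yD D_def by simp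
            have "\<bar>u x - \<phi> y\<bar> powr p / norm (x - y) powr \<alpha> \<le> 2 powr p * 2 powr \<alpha> * (\<bar>u x\<bar> powr p + M powr p) * norm y powr (-\<alpha>)"
              by (rule far_pt[OF xn yn py p]) (use al \<alpha>_def in simp)
            then have "F (u x - u y) (x - y) \<le> cS * K0 * (\<bar>u x\<bar> powr p + M powr p) * norm y powr (-\<alpha>)"
              using F1 cS unfolding K0_def \<alpha>_def
              by (smt (verit, ccfv_threshold) mult.assoc mult_left_mono)
            then have "ennreal (F (u x - u y) (x - y)) \<le> g2 y"
              unfolding g2_def using yD cS
              by (simp add: ennreal_mult[symmetric] ennreal_leI K0_def)
            then show ?thesis using False by (simp add: add_increasing)
          qed
        qed
      qed
    qed
    also have "\<dots> = (\<integral>\<^sup>+ y. g1 y \<partial>lebesgue) + (\<integral>\<^sup>+ y. g2 y \<partial>lebesgue)"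
      by (rule nn_integral_add) measurable
    also have "(\<integral>\<^sup>+ y. g1 y \<partial>lebesgue) = ennreal cS * I x"
      unfolding g1_def I_def using measurable_Pair2[OF Gm, of x]
      by (subst nn_integral_cmult) (simp_all, measurable)
    also have "(\<integral>\<^sup>+ y. g2 y \<partial>lebesgue) = ennreal (cS * K0 * (\<bar>u x\<bar> powr p + M powr p)) * T"
      unfolding g2_def T_def \<alpha>_def D_def
      by (subst nn_integral_cmult) (simp_all, measurable)
    also have "ennreal cS * I x + ennreal (cS * K0 * (\<bar>u x\<bar> powr p + M powr p)) * T = f x"
    proof -
      have K0: "0 \<le> K0" unfolding K0_def by simp
      have "ennreal (cS * K0 * (\<bar>u x\<bar> powr p + M powr p)) = ennreal (cS * K0) * (ennreal (\<bar>u x\<bar> powr p) + ennreal (M powr p))"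
        using cS K0 by (simp add: ennreal_mult ennreal_plus)
      then show ?thesis unfolding f_def by (simp add: distrib_left distrib_right mult_ac add.assoc)
    qed
    finally show ?thesis .
  qed
  have "uAB F u B (- B) \<le> (\<integral>\<^sup>+ x \<in> B. f x \<partial>lebesgue)"
    unfolding uAB_def
    by (rule nn_integral_mono) (use pt in \<open>auto simp: indicator_def\<close>)
  also have "\<dots> = ennreal cS * (\<integral>\<^sup>+ x \<in> B. I x \<partial>lebesgue)
      + ennreal (cS * K0) * T * (\<integral>\<^sup>+ x \<in> B. ennreal (\<bar>u x\<bar> powr p) \<partial>lebesgue)
      + ennreal (cS * K0) * T * ennreal (M powr p) * emeasure lebesgue B"
  proof -
    have [measurable]: "(\<lambda>x. ennreal (\<bar>u x\<bar> powr p)) \<in> borel_measurable lebesgue" using um by measurable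
    have "(\<integral>\<^sup>+ x \<in> B. f x \<partial>lebesgue) = (\<integral>\<^sup>+ x. ennreal cS * (I x * indicator B x)
       + ennreal (cS * K0) * T * (ennreal (\<bar>u x\<bar> powr p) * indicator B x)
       + ennreal (cS * K0) * T * ennreal (M powr p) * indicator B x \<partial>lebesgue)"
      unfolding f_def by (simp only: distrib_right mult.assoc)
    also have "\<dots> = (\<integral>\<^sup>+ x. ennreal cS * (I x * indicator B x) \<partial>lebesgue)
       + (\<integral>\<^sup>+ x. ennreal (cS * K0) * T * (ennreal (\<bar>u x\<bar> powr p) * indicator B x) \<partial>lebesgue)
       + (\<integral>\<^sup>+ x. ennreal (cS * K0) * T * ennreal (M powr p) * indicator B x \<partial>lebesgue)"
    proof -
      have m1[measurable]: "(\<lambda>x. ennreal cS * (I x * indicator B x)) \<in> borel_measurable lebesgue" by measurable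
      have m2[measurable]: "(\<lambda>x. ennreal (cS * K0) * T * (ennreal (\<bar>u x\<bar> powr p) * indicator B x)) \<in> borel_measurable lebesgue" by measurable
      have m3[measurable]: "(\<lambda>x. ennreal (cS * K0) * T * ennreal (M powr p) * indicator B x) \<in> borel_measurable lebesgue" by measurable
      have m12: "(\<lambda>x. ennreal cS * (I x * indicator B x) + ennreal (cS * K0) * T * (ennreal (\<bar>u x\<bar> powr p) * indicator B x)) \<in> borel_measurable lebesgue" by measurable
      show ?thesis using nn_integral_add[OF m12 m3] nn_integral_add[OF m1 m2] by simp
    qed
    also have "\<dots> = ennreal cS * (\<integral>\<^sup>+ x \<in> B. I x \<partial>lebesgue)
      + ennreal (cS * K0) * T * (\<integral>\<^sup>+ x \<in> B. ennreal (\<bar>u x\<bar> powr p) \<partial>lebesgue)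
      + ennreal (cS * K0) * T * ennreal (M powr p) * emeasure lebesgue B"
    proof -
      have m1: "(\<lambda>x. I x * indicator B x) \<in> borel_measurable lebesgue" by measurable
      have m2: "(\<lambda>x. ennreal (\<bar>u x\<bar> powr p) * indicator B x) \<in> borel_measurable lebesgue" by measurable
      show ?thesis using nn_integral_cmult[OF m1, of "ennreal cS"] nn_integral_cmult[OF m2, of "ennreal (cS * K0) * T"]
        nn_integral_cmult_indicator[of B lebesgue "ennreal (cS * K0) * T * ennreal (M powr p)"]
        by (simp only:) simp
    qed
    finally show ?thesis .
  qed
  also have "(\<integral>\<^sup>+ x \<in> B. I x \<partial>lebesgue) = bdry_pow s p R u \<phi>"
    unfolding bdry_pow_def I_def G_def A_def B_def \<alpha>_def ..
  finally show ?thesis unfolding Lp_pow_def B_def .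
qed


lemma pow2_powr: "((2::real) ^ (k+1)) powr (- b) = (2 powr (-b)) ^ (k+1)" for k::nat
proof -
  have "((2::real) ^ (k+1)) powr (- b) = (2 powr real (k+1)) powr (- b)"
    by (simp only: powr_realpow)
  also have "\<dots> = (2 powr (-b)) powr real (k+1)" by (simp add: powr_powr mult.commute)
  also have "\<dots> = (2 powr (-b)) ^ (k+1)" by (rule powr_realpow) simp
  finally show ?thesis .
qed

lemma term_le_suminf: "(f::nat \<Rightarrow> ennreal) k \<le> suminf f"
  using sum_le_suminf[OF summableI, of "{k}" f] by simp

lemma dyadic_k:
  fixes r R :: real
  assumes "0 < R" "2 * R \<le> r"
  shows "\<exists>k::nat. 2^(k+1) * R \<le> r \<and> r < 2^(k+2) * R"
proof -
  obtain m :: nat where m: "r / R < 2 ^ m" using real_arch_pow[of 2 "r/R"] by auto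
  have ex: "\<exists>k::nat. r < 2^(k+2) * R"
  proof (intro exI[of _ m])
    have "r < 2^m * R" using m assms by (simp add: divide_less_eq)
    moreover have "(2::real)^m * R \<le> 2^(m+2) * R" using assms by (intro mult_right_mono) (simp_all add: power_increasing)
    ultimately show "r < 2^(m+2) * R" by (rule less_le_trans)
  qed
  define k where "k = (LEAST k::nat. r < 2^(k+2) * R)"
  have k1: "r < 2^(k+2) * R" unfolding k_def by (rule LeastI_ex[OF ex])
  have k2: "2^(k+1) * R \<le> r"
  proof (cases k)
    case 0 then show ?thesis using assms by simp
  next
    case (Suc j)
    have "\<not> r < 2^(j+2) * R" using not_less_Least[of j "\<lambda>k. r < 2^(k+2) * R"] Suc k_def by simp
    then show ?thesis using Suc by simp
  qed
  show ?thesis using k1 k2 by blast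
qed

lemma tail_finite:
  fixes R \<alpha> \<beta> :: real
  assumes R: "0 < R" and b: "0 < \<beta>" and a: "\<alpha> = real DIM('a) + \<beta>"
  shows "(\<integral>\<^sup>+ y \<in> - ball (0::'a::euclidean_space) (2*R). ennreal (norm y powr (-\<alpha>)) \<partial>lebesgue) < \<infinity>"
proof -
  define n where "n = DIM('a)"
  define c where "c k = (2^(k+1)*R) powr (-\<alpha>)" for k :: nat
  define V where "V = emeasure lebesgue (ball (0::'a) 1)"
  have Vfin: "V < \<infinity>" unfolding V_def using emeasure_bounded_finite[OF bounded_ball, of "0::'a" 1]
    by simp
  then obtain Vr where Vr: "V = ennreal Vr" "0 \<le> Vr" by (cases V) auto
  have pt: "ennreal (norm y powr (-\<alpha>)) * indicator (- ball 0 (2*R)) y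
      \<le> (\<Sum>k. ennreal (c k) * indicator (ball (0::'a) (2^(k+2)*R)) y)" for y :: 'a
  proof (cases "y \<in> ball 0 (2*R)")
    case True then show ?thesis by simp
  next
    case False
    then have "2 * R \<le> norm y" by simp
    then obtain k :: nat where k: "2^(k+1) * R \<le> norm y" "norm y < 2^(k+2) * R"
      using dyadic_k[OF R] by blast
    have pos: "0 < 2^(k+1) * R" using R by simp
    have "norm y powr (-\<alpha>) \<le> c k" unfolding c_def
      by (rule powr_mono2'[OF _ pos k(1)]) (use a b in simp)
    then have "ennreal (norm y powr (-\<alpha>)) * indicator (- ball 0 (2*R)) y
        \<le> ennreal (c k) * indicator (ball (0::'a) (2^(k+2)*R)) y"
      using False k(2) by (simp add: ennreal_leI)
    also have "\<dots> \<le> (\<Sum>k. ennreal (c k) * indicator (ball (0::'a) (2^(k+2)*R)) y)"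
      by (rule term_le_suminf)
    finally show ?thesis .
  qed
  have "(\<integral>\<^sup>+ y \<in> - ball (0::'a) (2*R). ennreal (norm y powr (-\<alpha>)) \<partial>lebesgue)
      \<le> (\<integral>\<^sup>+ y. (\<Sum>k. ennreal (c k) * indicator (ball (0::'a) (2^(k+2)*R)) y) \<partial>lebesgue)"
    by (rule nn_integral_mono) (rule pt)
  also have "\<dots> = (\<Sum>k. ennreal (c k) * emeasure lebesgue (ball (0::'a) (2^(k+2)*R)))"
  proof -
    have [measurable]: "\<And>r. ball (0::'a) r \<in> sets lebesgue" by simp
    show ?thesis by (subst nn_integral_suminf, measurable) (auto simp: nn_integral_cmult_indicator)
  qed
  also have "\<dots> = (\<Sum>k. ennreal (2^n * R powr (-\<beta>) * 2 powr (-\<beta>) * Vr * (2 powr (-\<beta>))^k))"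
  proof (rule suminf_cong)
    fix k :: nat
    define \<rho> where "\<rho> = 2^(k+1) * R"
    have \<rho>: "0 < \<rho>" unfolding \<rho>_def using R by simp
    have e: "emeasure lebesgue (ball (0::'a) (2^(k+2)*R)) = ennreal ((2*\<rho>)^n) * V"
      unfolding V_def n_def \<rho>_def using R
      by (subst emeasure_lebesgue_ball_conv_unit_ball) (auto simp: mult_ac)
    have "c k * (2*\<rho>)^n = 2^n * \<rho> powr (-\<beta>)"
    proof -
      have "c k * (2*\<rho>)^n = 2^n * (\<rho> powr (-\<alpha>) * \<rho> powr real n)"
        unfolding c_def \<rho>_def[symmetric] using \<rho> by (simp add: power_mult_distrib powr_realpow)
      also have "\<rho> powr (-\<alpha>) * \<rho> powr real n = \<rho> powr (-\<beta>)"
        using \<rho> a by (simp add: powr_add[symmetric] n_def)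
      finally show ?thesis .
    qed
    also have "\<rho> powr (-\<beta>) = R powr (-\<beta>) * 2 powr (-\<beta>) * (2 powr (-\<beta>))^k"
      unfolding \<rho>_def using R pow2_powr[of k \<beta>] by (simp add: powr_mult mult_ac)
    finally have eq: "c k * (2*\<rho>)^n = 2^n * R powr (-\<beta>) * 2 powr (-\<beta>) * (2 powr (-\<beta>))^k"
      by simp
    have ck: "0 \<le> c k" unfolding c_def by simp
    show "ennreal (c k) * emeasure lebesgue (ball (0::'a) (2^(k+2)*R))
        = ennreal (2^n * R powr (-\<beta>) * 2 powr (-\<beta>) * Vr * (2 powr (-\<beta>))^k)"
      unfolding e Vr using ck \<rho> Vr(2) eq
      by (simp add: ennreal_mult'[symmetric] ennreal_mult[symmetric] mult_ac)
  qed
  also have "\<dots> < \<infinity>"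
  proof -
    have q: "2 powr (-\<beta>) < (1::real)" using b powr_less_mono[of "-\<beta>" 0 "2::real"] by simp
    have "summable (\<lambda>k. 2^n * R powr (-\<beta>) * 2 powr (-\<beta>) * Vr * (2 powr (-\<beta>))^k)"
      by (rule summable_mult) (rule summable_geometric, use q in simp)
    then show ?thesis using Vr(2) R
      by (simp add: less_top ennreal_suminf_neq_top)
  qed
  finally show ?thesis .
qed


lemma W_bound:
  fixes W :: "real \<Rightarrow> real"
  assumes cont: "continuous_on UNIV W" and L: "Linfty_norm W = ereal MW"
  shows "\<bar>W t\<bar> \<le> MW"
proof (rule ccontr)
  assume "\<not> \<bar>W t\<bar> \<le> MW"
  then have t: "t \<in> {x. MW < \<bar>W x\<bar>}" by simp
  have AE: "AE x in lebesgue. \<bar>W x\<bar> \<le> MW"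
    using esssup_AE[of "\<lambda>x. ereal \<bar>W x\<bar>" lebesgue] L unfolding Linfty_norm_def by simp
  then have AE': "AE x in lborel. \<bar>W x\<bar> \<le> MW" by (simp add: AE_completion_iff)
  define U where "U = {x. MW < \<bar>W x\<bar>}"
  have "open U" unfolding U_def
    by (intro open_Collect_less continuous_intros cont)
  then obtain e where e: "0 < e" "ball t e \<subseteq> U" using t U_def open_contains_ball by blast
  have Usets: "U \<in> sets lborel" using \<open>open U\<close> by simp
  have "emeasure lborel U = 0"
    using AE' by (subst (asm) AE_iff_measurable[OF Usets]) (auto simp: U_def)
  moreover have "emeasure lborel (ball t e) \<le> emeasure lborel U"
    using e Usets by (intro emeasure_mono) auto
  moreover have "ball t e = {t - e <..< t + e}" by (auto simp: dist_real_def)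
  ultimately show False using e by simp
qed



theorem proposition2:
  fixes s p R cS MW Mphi :: real
  assumes "0 < s" and "s < 1" and "1 \<le> p" and "0 < R" and "0 < cS"
  shows "\<exists>C>0. \<forall>(F :: real \<Rightarrow> 'a::euclidean_space \<Rightarrow> real) W \<phi> u.
           admissible_F s p cS F \<and> admissible_W W \<and> Linfty_norm W = ereal MW \<and>
           \<phi> \<in> X_R s p R \<and> Linfty_norm \<phi> = ereal Mphi \<and> u \<in> W_R_phi s p R \<phi> \<longrightarrow>
             energy F W R u \<le> ennreal C * (Wsp_norm_pow s p u (ball 0 R) + bdry_pow s p R u \<phi> + 1) \<and>
             K_R F R u = uAB F u (ball 0 R) (ball 0 R) + 2 * uAB F u (ball 0 R) (- ball 0 R)"
proof -
  define \<alpha> where "\<alpha> = real DIM('a) + s * p"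
  have sp: "0 < s * p" using assms by simp
  have al: "0 < \<alpha>" unfolding \<alpha>_def using sp by simp
  have p0: "0 < p" using assms by simp
  define T where "T = (\<integral>\<^sup>+ y \<in> - ball (0::'a) (2*R). ennreal (norm y powr (-(real DIM('a) + s * p))) \<partial>lebesgue)"
  have "T < \<infinity>" unfolding T_def by (rule tail_finite[OF assms(4) sp]) simp
  then obtain Tr where Tr: "T = ennreal Tr" "0 \<le> Tr" by (cases T) auto
  define V where "V = emeasure lebesgue (ball (0::'a) R)"
  have "V < \<infinity>" unfolding V_def using emeasure_bounded_finite[OF bounded_ball, of "0::'a" R] by simp
  then obtain Vr where Vr: "V = ennreal Vr" "0 \<le> Vr" by (cases V) auto
  define M where "M = max Mphi 0"
  define MW' where "MW' = max MW 0"
  define K0 where "K0 = 2 powr p * 2 powr (real DIM('a) + s * p)"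
  have K0: "0 \<le> K0" unfolding K0_def by simp
  define c2 where "c2 = 2 * (cS * K0 * Tr)"
  define c3 where "c3 = 2 * (cS * K0 * Tr * M powr p * Vr) + MW' * Vr"
  define C where "C = 2 * cS + c2 + c3 + 1"
  have cS0: "0 \<le> cS" using assms by simp
  have c2: "0 \<le> c2" unfolding c2_def using cS0 K0 Tr by simp
  have c3: "0 \<le> c3" unfolding c3_def MW'_def using cS0 K0 Tr Vr by simp
  have Cpos: "0 < C" unfolding C_def using cS0 c2 c3 by simp
  show ?thesis
  proof (intro exI[of _ C] conjI Cpos allI impI)
    fix F :: "real \<Rightarrow> 'a \<Rightarrow> real" and W :: "real \<Rightarrow> real" and \<phi> u :: "'a \<Rightarrow> real"
    assume H: "admissible_F s p cS F \<and> admissible_W W \<and> Linfty_norm W = ereal MW \<and>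
           \<phi> \<in> X_R s p R \<and> Linfty_norm \<phi> = ereal Mphi \<and> u \<in> W_R_phi s p R \<phi>"
    have Fm: "(\<lambda>(t, x). F t x) \<in> borel_measurable borel" using H unfolding admissible_F_def by blast
    have sym: "\<forall>t x. x \<noteq> 0 \<longrightarrow> F t x = F (-t) (-x)" using H unfolding admissible_F_def by blast
    have up: "\<forall>t x. x \<noteq> 0 \<longrightarrow> F t x \<le> cS * \<bar>t\<bar> powr p / norm x powr (real DIM('a) + s * p)"
      using H unfolding admissible_F_def by blast
    have phim: "\<phi> \<in> borel_measurable lebesgue" using H unfolding X_R_def in_Linfty_def by blast
    have uB: "set_borel_measurable lebesgue (ball 0 R) u" using H unfolding W_R_phi_def in_Wsp_def by blast
    have uphi: "\<forall>x. x \<notin> ball 0 R \<longrightarrow> u x = \<phi> x" using H unfolding W_R_phi_def by blast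
    have um: "u \<in> borel_measurable lebesgue" by (rule meas_u[OF uB phim uphi])
    have phibd: "AE y in lebesgue. \<bar>\<phi> y\<bar> \<le> M"
    proof -
      have "AE y in lebesgue. ereal \<bar>\<phi> y\<bar> \<le> ereal Mphi"
        using esssup_AE[of "\<lambda>x. ereal \<bar>\<phi> x\<bar>" lebesgue] H unfolding Linfty_norm_def by simp
      then show ?thesis by eventually_elim (auto simp: M_def)
    qed
    have Wb: "W t \<le> MW'" for t
    proof -
      have "continuous_on UNIV W" using H unfolding admissible_W_def
        by (blast intro: C1_differentiable_imp_continuous_on)
      then have "\<bar>W t\<bar> \<le> MW" using H by (intro W_bound) auto
      then show ?thesis unfolding MW'_def by simp
    qed
    have W0: "0 \<le> W t" for t using H unfolding admissible_W_def by blast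
    have split: "K_R F R u = uAB F u (ball 0 R) (ball 0 R) + 2 * uAB F u (ball 0 R) (- ball 0 R)"
      by (rule K_R_split[OF Fm um sym])
    have BB: "uAB F u (ball 0 R) (ball 0 R) \<le> ennreal cS * gagliardo_pow s p u (ball 0 R)"
      by (rule BB_bound[OF um cS0 up])
    have BC: "uAB F u (ball 0 R) (- ball 0 R) \<le> ennreal cS * bdry_pow s p R u \<phi>
     + ennreal (cS * K0) * T * Lp_pow p u (ball 0 R)
     + ennreal (cS * K0) * T * ennreal (M powr p) * emeasure lebesgue (ball (0::'a) R)"
      unfolding T_def K0_def
      by (rule BC_bound[OF um phim cS0 p0 _ up uphi phibd]) (use al \<alpha>_def in simp)
    have Wint: "(\<integral>\<^sup>+ x \<in> ball 0 R. ennreal (W (u x)) \<partial>lebesgue) \<le> ennreal (MW' * Vr)"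
    proof -
      have "(\<integral>\<^sup>+ x \<in> ball 0 R. ennreal (W (u x)) \<partial>lebesgue) \<le> (\<integral>\<^sup>+ x. ennreal MW' * indicator (ball (0::'a) R) x \<partial>lebesgue)"
        by (rule nn_integral_mono) (auto intro!: mult_right_mono ennreal_leI Wb)
      also have "\<dots> = ennreal MW' * V" unfolding V_def by (subst nn_integral_cmult_indicator) auto
      also have "\<dots> = ennreal (MW' * Vr)" using Vr by (simp add: ennreal_mult MW'_def)
      finally show ?thesis .
    qed
    define G where "G = gagliardo_pow s p u (ball 0 R)"
    define D where "D = bdry_pow s p R u \<phi>"
    define L where "L = Lp_pow p u (ball 0 R)"
    have e1: "ennreal (cS * K0) * T = ennreal (cS * K0 * Tr)" using Tr cS0 K0 by (simp add: ennreal_mult)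
    have e2: "ennreal (cS * K0 * Tr) * ennreal (M powr p) * emeasure lebesgue (ball (0::'a) R)
        = ennreal (cS * K0 * Tr * M powr p * Vr)"
      using Tr Vr cS0 K0 V_def by (simp add: ennreal_mult mult.assoc)
    have BC': "uAB F u (ball 0 R) (- ball 0 R) \<le> ennreal cS * D + ennreal (cS * K0 * Tr) * L + ennreal (cS * K0 * Tr * M powr p * Vr)"
      using BC unfolding e1 e2 D_def L_def .
    have "energy F W R u \<le> ennreal cS * G + 2 * (ennreal cS * D + ennreal (cS * K0 * Tr) * L + ennreal (cS * K0 * Tr * M powr p * Vr))
        + ennreal (MW' * Vr)"
      unfolding energy_def split G_def
      by (intro add_mono BB mult_left_mono BC' Wint) auto
    also have "\<dots> = ennreal cS * G + ennreal (2 * cS) * D + ennreal c2 * L + ennreal c3"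
    proof -
      define X where "X = cS * K0 * Tr * M powr p * Vr"
      have X: "0 \<le> X" unfolding X_def using cS0 K0 Tr Vr by simp
      have MV: "0 \<le> MW' * Vr" unfolding MW'_def using Vr by simp
      have a1: "2 * (ennreal cS * D) = ennreal (2 * cS) * D" using cS0 by (simp add: ennreal_mult mult.assoc)
      have a2: "2 * (ennreal (cS * K0 * Tr) * L) = ennreal c2 * L" unfolding c2_def using cS0 K0 Tr
        by (simp add: ennreal_mult mult.assoc)
      have a3: "2 * ennreal X + ennreal (MW' * Vr) = ennreal c3" unfolding c3_def X_def[symmetric]
        using X MV by (subst ennreal_plus) (auto simp: ennreal_mult)
      have "ennreal cS * G + 2 * (ennreal cS * D + ennreal (cS * K0 * Tr) * L + ennreal X) + ennreal (MW' * Vr)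
          = ennreal cS * G + 2 * (ennreal cS * D) + 2 * (ennreal (cS * K0 * Tr) * L) + (2 * ennreal X + ennreal (MW' * Vr))"
        by (simp add: distrib_left add.assoc)
      then show ?thesis unfolding a1 a2 a3 unfolding X_def .
    qed
    also have "\<dots> \<le> ennreal C * G + ennreal C * D + ennreal C * L + ennreal C"
      unfolding C_def using cS0 c2 c3
      by (intro add_mono mult_right_mono ennreal_leI) auto
    also have "\<dots> = ennreal C * (Wsp_norm_pow s p u (ball 0 R) + bdry_pow s p R u \<phi> + 1)"
      unfolding Wsp_norm_pow_def G_def D_def L_def by (simp add: distrib_left add_ac)
    finally show "energy F W R u \<le> ennreal C * (Wsp_norm_pow s p u (ball 0 R) + bdry_pow s p R u \<phi> + 1)" .
    show "K_R F R u = uAB F u (ball 0 R) (ball 0 R) + 2 * uAB F u (ball 0 R) (- ball 0 R)" by (rule split)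
  qed
qed

end
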